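(* Let $X,Z$ be real Banach spaces and $Y\subset X^*$ a closed subspace. Let $T:X\to Z$ be a bounded linear operator such that $T^*$ is an isometric isomorphism from $Z^*$ onto $Y$. Let $\varepsilon>0$ and let $\alpha$ be an ordinal such that $B_{X^*}\cap Y\subset d_\varepsilon^\alpha(B_{X^*})$. Then for every ordinal $\beta$ and every $z\in Z^*$: if $z\in d_\varepsilon^\beta(B_{Z^*})$, then $T^*z\in d_\varepsilon^{\alpha+\beta}(B_{X^*})$.
   Context: For a Banach space $W$, $B_{W^*}$ is the closed unit ball of $W^*$. For $w\in W$, $t\in\mathbb R$, let $H(w,t)=\{w^*\in W^*: w^*(w)>t\}$. For a weak$^*$-compact $K\subset W^*$, a weak$^*$-slice of $K$ is any nonempty set $H(w,t)\cap K$. For $\varepsilon>0$, $d_\varepsilon K$ is $K$ minus the union of all weak$^*$-slices of $K$ of norm diameter less than $\varepsilon$; $d_\varepsilon^0K=K$, $d_\varepsilon^{\beta+1}K=d_\varepsilon(d_\varepsilon^\beta K)$, $d_\varepsilon^\beta K=\bigcap_{\mu<\beta}d_\varepsilon^\mu K$ for limit $\beta$. $\alpha+\beta$ is ordinal addition. *)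

theory Defs
  imports "HOL-Analysis.Analysis"
begin

text \<open>Dual space W* is modelled as the type of bounded linear functionals W \<Rightarrow>L real,
  with the operator norm. Weak*-slice of K: nonempty set H(w,t) \<inter> K.\<close>

definition wstar_slice :: "'a::real_normed_vector \<Rightarrow> real \<Rightarrow> ('a \<Rightarrow>\<^sub>L real) set \<Rightarrow> ('a \<Rightarrow>\<^sub>L real) set"
  where "wstar_slice w t K = {f \<in> K. blinfun_apply f w > t}"

definition dder :: "real \<Rightarrow> ('a::real_normed_vector \<Rightarrow>\<^sub>L real) set \<Rightarrow> ('a \<Rightarrow>\<^sub>L real) set"
  where "dder eps K = K - \<Union>{S. \<exists>w t. S = wstar_slice w t K \<and> S \<noteq> {} \<and> diameter S < eps}"

text \<open>Ordinals are represented by well-orders (order types). One step of the transfinite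
  recursion: given the set A of previous positions (ordered by r) and the stages D at these
  positions, produce the next stage: K if A is empty (ordinal 0), d(D m) if A has a maximum m
  (successor ordinal), and the intersection otherwise (limit ordinal).\<close>
definition dstep :: "real \<Rightarrow> 'i rel \<Rightarrow> 'i set \<Rightarrow> ('i \<Rightarrow> ('a::real_normed_vector \<Rightarrow>\<^sub>L real) set)
    \<Rightarrow> ('a \<Rightarrow>\<^sub>L real) set \<Rightarrow> ('a \<Rightarrow>\<^sub>L real) set"
  where "dstep eps r A D K =
    (if A = {} then K
     else if (\<exists>m\<in>A. \<forall>j\<in>A. (j, m) \<in> r)
       then dder eps (D (SOME m. m \<in> A \<and> (\<forall>j\<in>A. (j, m) \<in> r)))
     else (\<Inter>j\<in>A. D j))"

text \<open>For a well-order r and i in Field r: dstage eps r K i = d_eps^gamma K, where gamma is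
  the order type of the strict initial segment underS r i.\<close>
definition dstage :: "real \<Rightarrow> 'i rel \<Rightarrow> ('a::real_normed_vector \<Rightarrow>\<^sub>L real) set \<Rightarrow> 'i \<Rightarrow> ('a \<Rightarrow>\<^sub>L real) set"
  where "dstage eps r K = wfrec (r - Id) (\<lambda>D i. dstep eps r (underS r i) D K)"

text \<open>dpow eps r K = d_eps^beta K where beta is the order type of the well-order r.\<close>
definition dpow :: "real \<Rightarrow> 'i rel \<Rightarrow> ('a::real_normed_vector \<Rightarrow>\<^sub>L real) set \<Rightarrow> ('a \<Rightarrow>\<^sub>L real) set"
  where "dpow eps r K = dstep eps r (Field r) (dstage eps r K) K"

text \<open>Ordinal sum of well-orders (copied from HOL-Cardinals Ordinal_Arithmetic).\<close>
definition osum :: "'a rel \<Rightarrow> 'b rel \<Rightarrow> ('a + 'b) rel"  (infixr \<open>+o\<close> 70)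
  where
    "r +o r' = map_prod Inl Inl ` r \<union> map_prod Inr Inr ` r' \<union>
     {(Inl a, Inr a') | a a' . a \<in> Field r \<and> a' \<in> Field r'}"

end

theory Submission
  imports Defs
begin

lemma some_max:
  assumes "\<exists>m\<in>A. \<forall>j\<in>A. (j, m) \<in> r"
  shows "(SOME m. m \<in> A \<and> (\<forall>j\<in>A. (j, m) \<in> r)) \<in> A \<and>
         (\<forall>j\<in>A. (j, SOME m. m \<in> A \<and> (\<forall>j\<in>A. (j, m) \<in> r)) \<in> r)"
  using someI_ex[of "\<lambda>m. m \<in> A \<and> (\<forall>j\<in>A. (j, m) \<in> r)"] assms by blast

lemma dstep_cong:
  assumes "\<And>j. j \<in> A \<Longrightarrow> D j = D' j"
  shows "dstep eps r A D K = dstep eps r A D' K"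
  using some_max[of A r] assms unfolding dstep_def by auto

lemma dstage_eq:
  assumes "wf (r - Id)"
  shows "dstage eps r K i = dstep eps r (underS r i) (dstage eps r K) K"
proof -
  have "dstage eps r K i = dstep eps r (underS r i) (cut (dstage eps r K) (r - Id) i) K"
    unfolding dstage_def by (subst wfrec[OF assms]) simp
  also have "\<dots> = dstep eps r (underS r i) (dstage eps r K) K"
    by (rule dstep_cong) (auto simp: cut_def underS_def)
  finally show ?thesis .
qed

lemma dder_sub: "dder eps K \<subseteq> K" unfolding dder_def by auto

lemma dstep_sub:
  assumes "\<And>j. j \<in> A \<Longrightarrow> D j \<subseteq> K"
  shows "dstep eps r A D K \<subseteq> K"
proof (cases "A = {}")
  case False
  show ?thesis
  proof (cases "\<exists>m\<in>A. \<forall>j\<in>A. (j, m) \<in> r")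
    case True
    have eq: "dstep eps r A D K = dder eps (D (SOME m. m \<in> A \<and> (\<forall>j\<in>A. (j, m) \<in> r)))"
      using True False by (simp add: dstep_def)
    show ?thesis unfolding eq using some_max[OF True] assms dder_sub by (meson subset_trans)
  next
    case F2: False
    then show ?thesis using False assms unfolding dstep_def by auto
  qed
qed (simp add: dstep_def)

lemma dstage_sub:
  assumes "wf (r - Id)" shows "dstage eps r K i \<subseteq> K"
proof (induction i rule: wf_induct[OF assms])
  case (1 i)
  have "dstage eps r K i = dstep eps r (underS r i) (dstage eps r K) K"
    by (rule dstage_eq[OF assms])
  also have "\<dots> \<subseteq> K"
    by (rule dstep_sub) (use 1 in \<open>auto simp: underS_def\<close>)
  finally show ?case .
qed

lemma dpow_sub:
  assumes "wf (r - Id)" shows "dpow eps r K \<subseteq> K"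
  unfolding dpow_def by (rule dstep_sub) (rule dstage_sub[OF assms])

lemma dstep_le:
  assumes a: "a \<in> A" and mono: "\<And>m. m \<in> A \<Longrightarrow> (a, m) \<in> r \<Longrightarrow> a \<noteq> m \<Longrightarrow> D m \<subseteq> D a"
  shows "dstep eps r A D K \<subseteq> D a"
proof (cases "\<exists>m\<in>A. \<forall>j\<in>A. (j, m) \<in> r")
  case True
  define m where "m = (SOME m. m \<in> A \<and> (\<forall>j\<in>A. (j, m) \<in> r))"
  have m: "m \<in> A" "\<forall>j\<in>A. (j, m) \<in> r" using some_max[OF True] m_def by auto
  have "dstep eps r A D K = dder eps (D m)"
  proof -
    have "A \<noteq> {}" using a by auto
    then show ?thesis using True by (simp add: dstep_def m_def[symmetric])
  qed
  also have "\<dots> \<subseteq> D m" by (rule dder_sub)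
  also have "\<dots> \<subseteq> D a"
    using mono[of m] m a by (cases "a = m") auto
  finally show ?thesis .
next
  case False
  then show ?thesis using a unfolding dstep_def by auto
qed

lemma dstage_anti:
  assumes "wf (r - Id)"
  shows "\<forall>j. j \<in> underS r i \<longrightarrow> dstage eps r K i \<subseteq> dstage eps r K j"
proof (induction i rule: wf_induct[OF assms])
  case (1 i)
  show ?case
  proof (intro allI impI)
    fix j assume j: "j \<in> underS r i"
    have e: "dstage eps r K i = dstep eps r (underS r i) (dstage eps r K) K"
      by (rule dstage_eq[OF assms])
    show "dstage eps r K i \<subseteq> dstage eps r K j"
      unfolding e
    proof (rule dstep_le[OF j])
      fix m assume "m \<in> underS r i" "(j, m) \<in> r" "j \<noteq> m"
      then show "dstage eps r K m \<subseteq> dstage eps r K j"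
        using 1 by (auto simp: underS_def)
    qed
  qed
qed

lemma dpow_le:
  assumes "wf (r - Id)" "a \<in> Field r"
  shows "dpow eps r K \<subseteq> dstage eps r K a"
  unfolding dpow_def
proof (rule dstep_le[OF assms(2)])
  fix m assume "m \<in> Field r" "(a, m) \<in> r" "a \<noteq> m"
  then show "dstage eps r K m \<subseteq> dstage eps r K a"
    using dstage_anti[OF assms(1), where i=m] by (auto simp: underS_def)
qed

lemma compose_diff: "(u - v) o\<^sub>L T = (u o\<^sub>L T) - (v o\<^sub>L T)"
  by (rule blinfun_eqI) (simp add: blinfun.diff_left)

lemma dder_transfer:
  fixes T :: "'a::real_normed_vector \<Rightarrow>\<^sub>L 'c::real_normed_vector"
  assumes iso: "\<forall>z :: 'c \<Rightarrow>\<^sub>L real. norm (z o\<^sub>L T) = norm z"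
    and map: "\<forall>u\<in>D1. u o\<^sub>L T \<in> D2" and bd: "bounded D2"
    and z: "z \<in> dder eps D1"
  shows "z o\<^sub>L T \<in> dder eps D2"
proof -
  have zD1: "z \<in> D1" using z by (simp add: dder_def)
  have notin: "z o\<^sub>L T \<notin> S" if S: "S = wstar_slice x t D2" "S \<noteq> {}" "diameter S < eps" for S x t
  proof
    assume zS: "z o\<^sub>L T \<in> S"
    define S' where "S' = wstar_slice (T x) t D1"
    have zS': "z \<in> S'" using zS zD1 S(1) by (simp add: S'_def wstar_slice_def)
    have "diameter S' \<le> diameter S"
    proof (rule diameter_le)
      show "S' \<noteq> {} \<or> 0 \<le> diameter S" using zS' by auto
      fix u v assume "u \<in> S'" "v \<in> S'"
      then have "u o\<^sub>L T \<in> S" "v o\<^sub>L T \<in> S" using map S(1) by (auto simp: S'_def wstar_slice_def)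
      then have "dist (u o\<^sub>L T) (v o\<^sub>L T) \<le> diameter S"
        using bd S(1) by (intro diameter_bounded_bound) (auto intro: bounded_subset simp: wstar_slice_def)
      moreover have "norm (u - v) = dist (u o\<^sub>L T) (v o\<^sub>L T)"
        using iso[rule_format, of "u - v"] by (simp add: dist_norm compose_diff)
      ultimately show "norm (u - v) \<le> diameter S" by simp
    qed
    then have "diameter S' < eps" using S(3) by simp
    then have "z \<notin> dder eps D1" using zS' unfolding dder_def S'_def by blast
    then show False using z by simp
  qed
  show ?thesis using map zD1 notin unfolding dder_def by blast
qed


lemma osum_Inl_Inl: "(Inl j, Inl m) \<in> osum r r' \<longleftrightarrow> (j, m) \<in> r"
  unfolding osum_def by auto
lemma osum_Inr_Inr: "(Inr j, Inr m) \<in> osum r r' \<longleftrightarrow> (j, m) \<in> r'"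
  unfolding osum_def by auto
lemma osum_Inr_Inl: "(Inr j, Inl m) \<notin> osum r r'"
  unfolding osum_def by auto
lemma osum_Inl_Inr: "(Inl j, Inr m) \<in> osum r r' \<longleftrightarrow> j \<in> Field r \<and> m \<in> Field r'"
  unfolding osum_def by auto

lemma Field_osum: "Field (osum r r') = Inl ` Field r \<union> Inr ` Field r'"
proof (intro set_eqI iffI)
  fix x assume "x \<in> Field (osum r r')"
  then obtain y where "(x, y) \<in> osum r r' \<or> (y, x) \<in> osum r r'" unfolding Field_def by blast
  then show "x \<in> Inl ` Field r \<union> Inr ` Field r'"
    by (cases x; cases y) (auto simp: osum_Inl_Inl osum_Inr_Inr osum_Inr_Inl osum_Inl_Inr intro: FieldI1 FieldI2)
next
  fix x assume "x \<in> Inl ` Field r \<union> Inr ` Field r'"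
  then show "x \<in> Field (osum r r')"
  proof
    assume "x \<in> Inl ` Field r"
    then obtain a where a: "x = Inl a" "a \<in> Field r" by blast
    then obtain c where "(a, c) \<in> r \<or> (c, a) \<in> r" unfolding Field_def by blast
    then show ?thesis using a by (metis FieldI1 FieldI2 osum_Inl_Inl)
  next
    assume "x \<in> Inr ` Field r'"
    then obtain a where a: "x = Inr a" "a \<in> Field r'" by blast
    then obtain c where "(a, c) \<in> r' \<or> (c, a) \<in> r'" unfolding Field_def by blast
    then show ?thesis using a by (metis FieldI1 FieldI2 osum_Inr_Inr)
  qed
qed

lemma underS_Inl: "underS (osum r r') (Inl a) = Inl ` underS r a"
proof (intro set_eqI)
  fix x show "x \<in> underS (osum r r') (Inl a) \<longleftrightarrow> x \<in> Inl ` underS r a"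
    by (cases x) (auto simp: underS_def osum_Inl_Inl osum_Inr_Inl)
qed

lemma underS_Inr: "b \<in> Field r' \<Longrightarrow> underS (osum r r') (Inr b) = Inl ` Field r \<union> Inr ` underS r' b"
proof (intro set_eqI)
  fix x assume "b \<in> Field r'"
  then show "x \<in> underS (osum r r') (Inr b) \<longleftrightarrow> x \<in> Inl ` Field r \<union> Inr ` underS r' b"
    by (cases x) (auto simp: underS_def osum_Inl_Inr osum_Inr_Inr)
qed

lemma wf_osum:
  assumes "wf (r - Id)" "wf (r' - Id)"
  shows "wf ((osum r r') - Id)"
proof -
  let ?R1 = "map_prod Inl Inl ` (r - Id) :: ('a + 'b) rel"
  let ?R2 = "map_prod Inr Inr ` (r' - Id) :: ('a + 'b) rel"
  let ?R3 = "{(x, y). isl x \<and> \<not> isl y} :: ('a + 'b) rel"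
  have w1: "wf ?R1" by (rule wf_map_prod_image[OF assms(1)]) simp
  have w2: "wf ?R2" by (rule wf_map_prod_image[OF assms(2)]) simp
  have w3: "wf ?R3"
    by (rule wf_subset[OF wf_measure[of "\<lambda>x. if isl x then 0 else 1"]]) auto
  have w13: "wf (?R1 \<union> ?R3)" by (rule wf_Un[OF w1 w3]) auto
  have w: "wf ((?R1 \<union> ?R3) \<union> ?R2)" by (rule wf_Un[OF w13 w2]) auto
  show ?thesis by (rule wf_subset[OF w]) (auto simp: osum_def)
qed

lemma dstep_Inl:
  assumes "antisym r" "\<And>j. j \<in> U \<Longrightarrow> D' (Inl j) = D j"
  shows "dstep eps (osum r r') (Inl ` U) D' K = dstep eps r U D K"
proof (cases "U = {}")
  case True then show ?thesis by (simp add: dstep_def)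
next
  case False
  have ex: "(\<exists>m\<in>Inl ` U. \<forall>j\<in>Inl ` U. (j, m) \<in> osum r r') \<longleftrightarrow> (\<exists>m\<in>U. \<forall>j\<in>U. (j, m) \<in> r)"
    by (auto simp: osum_Inl_Inl)
  show ?thesis
  proof (cases "\<exists>m\<in>U. \<forall>j\<in>U. (j, m) \<in> r")
    case True
    define m where "m = (SOME m. m \<in> U \<and> (\<forall>j\<in>U. (j, m) \<in> r))"
    define M where "M = (SOME m. m \<in> Inl ` U \<and> (\<forall>j\<in>Inl ` U. (j, m) \<in> osum r r'))"
    have m: "m \<in> U" "\<forall>j\<in>U. (j, m) \<in> r" using some_max[OF True] m_def by auto
    have M: "M \<in> Inl ` U" "\<forall>j\<in>Inl ` U. (j, M) \<in> osum r r'"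
      using some_max[of "Inl ` U" "osum r r'"] True ex M_def by auto
    then obtain m1 where m1: "M = Inl m1" "m1 \<in> U" by auto
    have "\<forall>j\<in>U. (j, m1) \<in> r" using M(2) m1 by (auto simp: osum_Inl_Inl)
    then have "m1 = m" using m m1(2) assms(1) by (auto simp: antisym_def)
    then show ?thesis unfolding dstep_def M_def[symmetric] m_def[symmetric]
      using False True ex m1 m(1) assms(2) by simp
  next
    case F2: False
    then show ?thesis using False ex assms(2) by (auto simp: dstep_def)
  qed
qed

lemma dstep_Inr:
  fixes T :: "'a::real_normed_vector \<Rightarrow>\<^sub>L 'c::real_normed_vector"
    and D :: "'j \<Rightarrow> ('c \<Rightarrow>\<^sub>L real) set" and D' :: "'i + 'j \<Rightarrow> ('a \<Rightarrow>\<^sub>L real) set"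
    and a :: "'i rel" and b :: "'j rel"
  assumes iso: "\<forall>z :: 'c \<Rightarrow>\<^sub>L real. norm (z o\<^sub>L T) = norm z"
    and antib: "antisym b"
    and U: "U \<subseteq> Field b"
    and IH: "\<And>j u. j \<in> U \<Longrightarrow> u \<in> D j \<Longrightarrow> u o\<^sub>L T \<in> D' (Inr j)"
    and bd: "\<And>j. j \<in> U \<Longrightarrow> bounded (D' (Inr j))"
    and base: "z \<in> KZ \<Longrightarrow> z o\<^sub>L T \<in> dstep eps (osum a b) (Inl ` Field a) D' KX"
    and lim: "\<And>x. z \<in> KZ \<Longrightarrow> x \<in> Field a \<Longrightarrow> z o\<^sub>L T \<in> D' (Inl x)"
    and z: "z \<in> dstep eps b U D KZ" "z \<in> KZ"
  shows "z o\<^sub>L T \<in> dstep eps (osum a b) (Inl ` Field a \<union> Inr ` U) D' KX"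
proof (cases "U = {}")
  case True then show ?thesis using base z by (simp add: dstep_def)
next
  case False
  let ?A = "Inl ` Field a \<union> Inr ` U"
  have Ane: "?A \<noteq> {}" using False by auto
  obtain j0 where j0: "j0 \<in> U" using False by auto
  have ex: "(\<exists>m\<in>?A. \<forall>j\<in>?A. (j, m) \<in> osum a b) \<longleftrightarrow> (\<exists>m\<in>U. \<forall>j\<in>U. (j, m) \<in> b)"
  proof
    assume "\<exists>m\<in>?A. \<forall>j\<in>?A. (j, m) \<in> osum a b"
    then obtain m where m: "m \<in> ?A" "\<forall>j\<in>?A. (j, m) \<in> osum a b" by blast
    then have "(Inr j0, m) \<in> osum a b" using j0 by auto
    then obtain m' where m': "m = Inr m'" by (cases m) (auto simp: osum_Inr_Inl)
    then have "m' \<in> U" using m(1) by auto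
    moreover have "\<forall>j\<in>U. (j, m') \<in> b"
    proof
      fix j assume "j \<in> U"
      then have "Inr j \<in> ?A" by blast
      then have "(Inr j, m) \<in> osum a b" using m(2) by blast
      then show "(j, m') \<in> b" using m' by (simp add: osum_Inr_Inr)
    qed
    ultimately show "\<exists>m\<in>U. \<forall>j\<in>U. (j, m) \<in> b" by blast
  next
    assume "\<exists>m\<in>U. \<forall>j\<in>U. (j, m) \<in> b"
    then obtain m where m: "m \<in> U" "\<forall>j\<in>U. (j, m) \<in> b" by blast
    have "\<forall>j\<in>?A. (j, Inr m) \<in> osum a b" using m U by (auto simp: osum_Inr_Inr osum_Inl_Inr)
    then show "\<exists>m\<in>?A. \<forall>j\<in>?A. (j, m) \<in> osum a b" using m(1) by blast
  qed
  show ?thesis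
  proof (cases "\<exists>m\<in>U. \<forall>j\<in>U. (j, m) \<in> b")
    case True
    define m where "m = (SOME m. m \<in> U \<and> (\<forall>j\<in>U. (j, m) \<in> b))"
    define M where "M = (SOME m. m \<in> ?A \<and> (\<forall>j\<in>?A. (j, m) \<in> osum a b))"
    have m: "m \<in> U" "\<forall>j\<in>U. (j, m) \<in> b" using some_max[OF True] m_def by auto
    have M: "M \<in> ?A" "\<forall>j\<in>?A. (j, M) \<in> osum a b"
      using some_max[of ?A "osum a b"] True ex M_def by auto
    then have "(Inr j0, M) \<in> osum a b" using j0 by auto
    then obtain m1 where m1: "M = Inr m1" by (cases M) (auto simp: osum_Inr_Inl)
    then have m1U: "m1 \<in> U" using M(1) by auto
    have "\<forall>j\<in>U. (j, m1) \<in> b"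
    proof
      fix j assume "j \<in> U"
      then have "Inr j \<in> ?A" by blast
      then have "(Inr j, M) \<in> osum a b" using M(2) by blast
      then show "(j, m1) \<in> b" using m1 by (simp add: osum_Inr_Inr)
    qed
    then have mm: "m1 = m" using m m1U antib by (auto simp: antisym_def)
    have e1: "dstep eps b U D KZ = dder eps (D m)"
      unfolding dstep_def m_def[symmetric] using False True by simp
    have e2: "dstep eps (osum a b) ?A D' KX = dder eps (D' (Inr m))"
      unfolding dstep_def M_def[symmetric] using False True ex m1 mm by simp
    show ?thesis unfolding e2
    proof (rule dder_transfer[OF iso])
      show "\<forall>u\<in>D m. u o\<^sub>L T \<in> D' (Inr m)" using IH m(1) by blast
      show "bounded (D' (Inr m))" using bd m(1) by blast
      show "z \<in> dder eps (D m)" using z(1) e1 by simp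
    qed
  next
    case F2: False
    have "z \<in> (\<Inter>j\<in>U. D j)" using z(1) False F2 by (simp add: dstep_def)
    then have "z o\<^sub>L T \<in> (\<Inter>x\<in>?A. D' x)" using IH lim z(2) by auto
    moreover have "\<not> (\<exists>m\<in>?A. \<forall>j\<in>?A. (j, m) \<in> osum a b)" using F2 ex by blast
    ultimately show ?thesis using Ane unfolding dstep_def by (simp only: if_False)
  qed
qed


theorem mainTheorem5:
  fixes T :: "'a::banach \<Rightarrow>\<^sub>L 'c::banach"
    and Y :: "('a \<Rightarrow>\<^sub>L real) set"
    and eps :: real
    and \<alpha> :: "'i rel"
  assumes "subspace Y" and "closed Y"
    and "\<forall>z :: 'c \<Rightarrow>\<^sub>L real. norm (z o\<^sub>L T) = norm z"
    and "(\<lambda>z :: 'c \<Rightarrow>\<^sub>L real. z o\<^sub>L T) ` UNIV = Y"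
    and "eps > 0"
    and "Well_order \<alpha>"
    and "cball 0 1 \<inter> Y \<subseteq> dpow eps \<alpha> (cball 0 1)"
  shows "\<forall>(\<beta> :: 'j rel) (z :: 'c \<Rightarrow>\<^sub>L real). Well_order \<beta> \<longrightarrow>
           z \<in> dpow eps \<beta> (cball 0 1) \<longrightarrow> z o\<^sub>L T \<in> dpow eps (\<alpha> +o \<beta>) (cball 0 1)"
proof (intro allI impI)
  fix \<beta> :: "'j rel" and z :: "'c \<Rightarrow>\<^sub>L real"
  assume wb: "Well_order \<beta>" and zb: "z \<in> dpow eps \<beta> (cball 0 1)"
  define s where "s = osum \<alpha> \<beta>"
  define KX where "KX = (cball 0 1 :: ('a \<Rightarrow>\<^sub>L real) set)"
  define KZ where "KZ = (cball 0 1 :: ('c \<Rightarrow>\<^sub>L real) set)"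
  have wfa: "wf (\<alpha> - Id)" using assms(6) by (simp add: well_order_on_def)
  have wfb: "wf (\<beta> - Id)" using wb by (simp add: well_order_on_def)
  have wfs: "wf (s - Id)" unfolding s_def by (rule wf_osum[OF wfa wfb])
  have antia: "antisym \<alpha>" using assms(6)
    by (simp add: well_order_on_def linear_order_on_def partial_order_on_def)
  have antib: "antisym \<beta>" using wb
    by (simp add: well_order_on_def linear_order_on_def partial_order_on_def)
  have claimA: "dstage eps s KX (Inl x) = dstage eps \<alpha> KX x" for x
  proof (induction x rule: wf_induct[OF wfa])
    case (1 x)
    have "dstage eps s KX (Inl x) = dstep eps s (underS s (Inl x)) (dstage eps s KX) KX"
      by (rule dstage_eq[OF wfs])
    also have "\<dots> = dstep eps \<alpha> (underS \<alpha> x) (dstage eps \<alpha> KX) KX"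
      unfolding s_def underS_Inl
      by (rule dstep_Inl[OF antia]) (use 1 in \<open>auto simp: underS_def s_def\<close>)
    also have "\<dots> = dstage eps \<alpha> KX x" by (rule dstage_eq[OF wfa, symmetric])
    finally show ?case .
  qed
  have dpa: "dstep eps s (Inl ` Field \<alpha>) (dstage eps s KX) KX = dpow eps \<alpha> KX"
    unfolding dpow_def s_def by (rule dstep_Inl[OF antia]) (simp add: claimA[unfolded s_def])
  have inY: "w o\<^sub>L T \<in> dpow eps \<alpha> KX" if "w \<in> KZ" for w
  proof -
    have "w o\<^sub>L T \<in> KX" using that assms(3) by (simp add: KX_def KZ_def)
    moreover have "w o\<^sub>L T \<in> Y" using assms(4) by blast
    ultimately show ?thesis using assms(7) by (auto simp: KX_def)
  qed
  have lim: "w o\<^sub>L T \<in> dstage eps s KX (Inl x)" if "w \<in> KZ" "x \<in> Field \<alpha>" for w x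
    using inY[OF that(1)] dpow_le[OF wfa that(2)] claimA by auto
  have bdd: "bounded (dstage eps s KX y)" for y
    using dstage_sub[OF wfs] bounded_cball bounded_subset unfolding KX_def by metis
  have main: "b \<in> Field \<beta> \<longrightarrow> (\<forall>u. u \<in> dstage eps \<beta> KZ b \<longrightarrow> u o\<^sub>L T \<in> dstage eps s KX (Inr b))" for b
  proof (induction b rule: wf_induct[OF wfb])
    case (1 b)
    show ?case
    proof (intro allI impI)
      fix u assume bF: "b \<in> Field \<beta>" and u: "u \<in> dstage eps \<beta> KZ b"
      have uK: "u \<in> KZ" using u dstage_sub[OF wfb] by blast
      have eu: "dstage eps \<beta> KZ b = dstep eps \<beta> (underS \<beta> b) (dstage eps \<beta> KZ) KZ"
        by (rule dstage_eq[OF wfb])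
      have u': "u \<in> dstep eps \<beta> (underS \<beta> b) (dstage eps \<beta> KZ) KZ" using u unfolding eu .
      have eqb: "dstage eps s KX (Inr b) = dstep eps (\<alpha> +o \<beta>) (Inl ` Field \<alpha> \<union> Inr ` underS \<beta> b) (dstage eps (\<alpha> +o \<beta>) KX) KX"
      proof -
        have "dstage eps s KX (Inr b) = dstep eps s (underS s (Inr b)) (dstage eps s KX) KX"
          by (rule dstage_eq[OF wfs])
        moreover have "underS s (Inr b) = Inl ` Field \<alpha> \<union> Inr ` underS \<beta> b"
          unfolding s_def by (rule underS_Inr[OF bF])
        ultimately show ?thesis unfolding s_def by simp
      qed
      show "u o\<^sub>L T \<in> dstage eps s KX (Inr b)"
        unfolding eqb
      proof (rule dstep_Inr[OF assms(3) antib _ _ _ _ _ u' uK])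
        show "underS \<beta> b \<subseteq> Field \<beta>" by (auto simp: underS_def intro: FieldI1)
        show "\<And>j u. j \<in> underS \<beta> b \<Longrightarrow> u \<in> dstage eps \<beta> KZ j \<Longrightarrow> u o\<^sub>L T \<in> dstage eps (\<alpha> +o \<beta>) KX (Inr j)"
          using 1 by (auto simp: underS_def s_def intro: FieldI1)
        show "\<And>j. j \<in> underS \<beta> b \<Longrightarrow> bounded (dstage eps (\<alpha> +o \<beta>) KX (Inr j))"
          using bdd by (simp add: s_def)
        show "u \<in> KZ \<Longrightarrow> u o\<^sub>L T \<in> dstep eps (\<alpha> +o \<beta>) (Inl ` Field \<alpha>) (dstage eps (\<alpha> +o \<beta>) KX) KX"
          using dpa inY by (simp add: s_def)
        show "\<And>x. u \<in> KZ \<Longrightarrow> x \<in> Field \<alpha> \<Longrightarrow> u o\<^sub>L T \<in> dstage eps (\<alpha> +o \<beta>) KX (Inl x)"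
          using lim by (simp add: s_def)
      qed
    qed
  qed
  have zK: "z \<in> KZ" using zb dpow_sub[OF wfb] unfolding KZ_def by blast
  have zb': "z \<in> dstep eps \<beta> (Field \<beta>) (dstage eps \<beta> KZ) KZ" using zb by (simp add: dpow_def KZ_def)
  have "z o\<^sub>L T \<in> dpow eps s KX"
    unfolding dpow_def s_def Field_osum
  proof (rule dstep_Inr[OF assms(3) antib _ _ _ _ _ zb' zK])
    show "Field \<beta> \<subseteq> Field \<beta>" by simp
    show "\<And>j u. j \<in> Field \<beta> \<Longrightarrow> u \<in> dstage eps \<beta> KZ j \<Longrightarrow> u o\<^sub>L T \<in> dstage eps (\<alpha> +o \<beta>) KX (Inr j)"
      using main by (simp add: s_def)
    show "\<And>j. j \<in> Field \<beta> \<Longrightarrow> bounded (dstage eps (\<alpha> +o \<beta>) KX (Inr j))"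
      using bdd by (simp add: s_def)
    show "z \<in> KZ \<Longrightarrow> z o\<^sub>L T \<in> dstep eps (\<alpha> +o \<beta>) (Inl ` Field \<alpha>) (dstage eps (\<alpha> +o \<beta>) KX) KX"
      using dpa inY by (simp add: s_def)
    show "\<And>x. z \<in> KZ \<Longrightarrow> x \<in> Field \<alpha> \<Longrightarrow> z o\<^sub>L T \<in> dstage eps (\<alpha> +o \<beta>) KX (Inl x)"
      using lim by (simp add: s_def)
  qed
  then show "z o\<^sub>L T \<in> dpow eps (\<alpha> +o \<beta>) (cball 0 1)" by (simp add: s_def KX_def)
qed

end
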